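(* Let $f=(f_0,f_1)\in F\times F$ be such that $P_1^f\ll P_0^f$, and let $T$ be an anonymous comparison test that is error-free. Then $P_0^f(\{T(\cdot,f)=0\})<1$.
   Context: Let $\Omega=\{0,1\}$ and let $\Omega^\infty$ be the set of infinite sequences $\omega=(\omega_1,\omega_2,\dots)$ with $\omega_t\in\Omega$; $\omega^t=(\omega_1,\dots,\omega_t)$ denotes the prefix of length $t$ and also the cylinder set $\{\hat\omega\in\Omega^\infty:\hat\omega^t=\omega^t\}$. $\Omega^\infty$ carries the $\sigma$-algebra generated by all cylinders. $\Delta(\Omega)$ is the set of probability distributions on $\Omega$. A forecasting strategy is a function $f:\bigcup_{t\ge 0}(\Omega\times\Delta(\Omega)\times\Delta(\Omega))^t\to\Delta(\Omega)$; $F$ denotes the set of all forecasting strategies. For a pair $f=(f_0,f_1)\in F\times F$ and $\omega\in\Omega^\infty$, the play path $h=h(\omega,f_0,f_1)\in(\Omega\times\Delta(\Omega)\times\Delta(\Omega))^\infty$ is defined recursively by $h^0=\emptyset$ and $h^t=(h^{t-1},(\omega_t,f_0(h^{t-1}),f_1(h^{t-1})))$; $h^n$ denotes its prefix of length $n$ and $h_n$ its suffix starting at coordinate $n$. The pair $f$ induces probability measures $P_0^f,P_1^f$ on $\Omega^\infty$ determined by $P_i^f(\omega^t)=\prod_{n=1}^t f_i(h^{n-1}(\omega,f_0,f_1))[\omega_n]$. A comparison test is a function $T:\Omega^\infty\times F\times F\to\{0,\tfrac12,1\}$, measurable in $\omega$ for each fixed pair; $T=i\in\{0,1\}$ means expert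 $i$ is deemed better informed, $T=\tfrac12$ means inconclusive. Write $\{T(\cdot,f)=k\}=\{\omega: T(\omega,f_0,f_1)=k\}$. $T$ is anonymous if $T(\omega,f_0,f_1)=1-T(\omega,f_1,f_0)$ for all $\omega,f_0,f_1$. $T$ is error-free if for all $f\in F\times F$ and $i\in\{0,1\}$, $P_{1-i}^f(\{T(\cdot,f)=i\})=0$. *)

theory Defs
  imports "HOL-Probability.Probability"
begin

text \<open>Outcomes: \<Omega> = {0,1} is rendered as bool (False = 0, True = 1).
  Infinite sequences \<omega> = (\<omega>_1, \<omega>_2, ...) are functions nat => bool with
  \<omega>_t stored at index t - 1. Distributions on \<Omega> are bool pmf.\<close>

type_synonym outcome_seq = "nat \<Rightarrow> bool"
type_synonym hist = "(bool \<times> bool pmf \<times> bool pmf) list"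
type_synonym strategy = "hist \<Rightarrow> bool pmf"

definition cyl :: "outcome_seq \<Rightarrow> nat \<Rightarrow> outcome_seq set" where
  "cyl \<omega> t = {\<omega>'. \<forall>n<t. \<omega>' n = \<omega> n}"

definition Omega_inf :: "outcome_seq measure" where
  "Omega_inf = sigma UNIV {cyl \<omega> t | \<omega> t. True}"

fun play :: "outcome_seq \<Rightarrow> strategy \<Rightarrow> strategy \<Rightarrow> nat \<Rightarrow> hist" where
  "play \<omega> f0 f1 0 = []"
| "play \<omega> f0 f1 (Suc t) =
     (let h = play \<omega> f0 f1 t in h @ [(\<omega> t, f0 h, f1 h)])"

text \<open>P_i^f(\<omega>^t) = prod_{n=1}^t f_i(h^{n-1})[\<omega>_n]; i = False is expert 0, i = True expert 1.\<close>
definition cyl_prob :: "bool \<Rightarrow> strategy \<Rightarrow> strategy \<Rightarrow> outcome_seq \<Rightarrow> nat \<Rightarrow> real" where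
  "cyl_prob i f0 f1 \<omega> t =
     (\<Prod>n<t. pmf ((if i then f1 else f0) (play \<omega> f0 f1 n)) (\<omega> n))"

definition induced :: "bool \<Rightarrow> strategy \<Rightarrow> strategy \<Rightarrow> outcome_seq measure" where
  "induced i f0 f1 = (THE M. prob_space M \<and> sets M = sets Omega_inf \<and>
      (\<forall>\<omega> t. measure M (cyl \<omega> t) = cyl_prob i f0 f1 \<omega> t))"

abbreviation P0 :: "strategy \<Rightarrow> strategy \<Rightarrow> outcome_seq measure" where
  "P0 f0 f1 \<equiv> induced False f0 f1"
abbreviation P1 :: "strategy \<Rightarrow> strategy \<Rightarrow> outcome_seq measure" where
  "P1 f0 f1 \<equiv> induced True f0 f1"

type_synonym test = "outcome_seq \<Rightarrow> strategy \<Rightarrow> strategy \<Rightarrow> real"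

definition comparison_test :: "test \<Rightarrow> bool" where
  "comparison_test T \<longleftrightarrow>
     (\<forall>\<omega> f0 f1. T \<omega> f0 f1 \<in> {0, 1/2, 1}) \<and>
     (\<forall>f0 f1. {\<omega>. T \<omega> f0 f1 = 0} \<in> sets Omega_inf \<and>
              {\<omega>. T \<omega> f0 f1 = 1/2} \<in> sets Omega_inf \<and>
              {\<omega>. T \<omega> f0 f1 = 1} \<in> sets Omega_inf)"

definition anonymous :: "test \<Rightarrow> bool" where
  "anonymous T \<longleftrightarrow> (\<forall>\<omega> f0 f1. T \<omega> f0 f1 = 1 - T \<omega> f1 f0)"

definition error_free :: "test \<Rightarrow> bool" where
  "error_free T \<longleftrightarrow> (\<forall>f0 f1.
      measure (P1 f0 f1) {\<omega>. T \<omega> f0 f1 = 0} = 0 \<and>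
      measure (P0 f0 f1) {\<omega>. T \<omega> f0 f1 = 1} = 0)"

end

theory Submission
  imports Defs
begin

lemma play_cong: "(\<forall>k<n. \<omega> k = \<omega>' k) \<Longrightarrow> play \<omega> f0 f1 n = play \<omega>' f0 f1 n"
  by (induction n) (auto simp: Let_def)

lemma cyl_prob_cong: "(\<forall>k<n. \<omega> k = \<omega>' k) \<Longrightarrow> cyl_prob i f0 f1 \<omega> n = cyl_prob i f0 f1 \<omega>' n"
proof -
  assume h: "\<forall>k<n. \<omega> k = \<omega>' k"
  have "\<And>x. x < n \<Longrightarrow> play \<omega> f0 f1 x = play \<omega>' f0 f1 x"
    using h by (intro play_cong) auto
  then show ?thesis unfolding cyl_prob_def using h by (intro prod.cong) auto
qed

lemma cyl_prob_Suc: "cyl_prob i f0 f1 \<omega> (Suc t) =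
   cyl_prob i f0 f1 \<omega> t * pmf ((if i then f1 else f0) (play \<omega> f0 f1 t)) (\<omega> t)"
  unfolding cyl_prob_def by simp

lemma cyl_prob_nonneg: "0 \<le> cyl_prob i f0 f1 \<omega> t"
  unfolding cyl_prob_def by (auto intro: prod_nonneg)

context
  fixes i :: bool and f0 f1 :: strategy
begin

definition G :: "outcome_seq \<Rightarrow> nat \<Rightarrow> bool pmf" where
  "G \<omega> n = (if i then f1 else f0) (play \<omega> f0 f1 n)"

definition cp :: "outcome_seq \<Rightarrow> nat \<Rightarrow> real" where
  "cp \<omega> t = cyl_prob i f0 f1 \<omega> t"

definition pF :: "outcome_seq \<Rightarrow> nat \<Rightarrow> real" where
  "pF \<omega> n = pmf (G \<omega> n) False"

fun lo :: "outcome_seq \<Rightarrow> nat \<Rightarrow> real" where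
  "lo \<omega> 0 = 0"
| "lo \<omega> (Suc t) = lo \<omega> t + (if \<omega> t then cp \<omega> t * pF \<omega> t else 0)"

fun pre :: "real \<Rightarrow> nat \<Rightarrow> bool list" where
  "pre x 0 = []"
| "pre x (Suc n) = (let bs = pre x n; s = (\<lambda>k. bs ! k) in
      bs @ [lo s n + cp s n * pF s n \<le> x])"

definition Phi :: "real \<Rightarrow> outcome_seq" where
  "Phi x n = pre x (Suc n) ! n"

lemma G_cong: "(\<forall>k<n. \<omega> k = \<omega>' k) \<Longrightarrow> G \<omega> n = G \<omega>' n"
  unfolding G_def using play_cong by metis

lemma pF_cong: "(\<forall>k<n. \<omega> k = \<omega>' k) \<Longrightarrow> pF \<omega> n = pF \<omega>' n"
  unfolding pF_def using G_cong by metis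

lemma cp_cong: "(\<forall>k<n. \<omega> k = \<omega>' k) \<Longrightarrow> cp \<omega> n = cp \<omega>' n"
  unfolding cp_def using cyl_prob_cong by metis

lemma lo_cong: "(\<forall>k<n. \<omega> k = \<omega>' k) \<Longrightarrow> lo \<omega> n = lo \<omega>' n"
proof (induction n)
  case 0 then show ?case by simp
next
  case (Suc n)
  then have h: "\<forall>k<n. \<omega> k = \<omega>' k" by auto
  show ?case using Suc.IH[OF h] cp_cong[OF h] pF_cong[OF h] Suc.prems by simp
qed

lemma length_pre: "length (pre x n) = n"
  by (induction n) (auto simp: Let_def)

lemma pre_nth: "k < n \<Longrightarrow> pre x n ! k = Phi x k"
proof (induction n)
  case 0 then show ?case by simp
next
  case (Suc n)
  show ?case
  proof (cases "k < n")
    case True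
    then show ?thesis using Suc length_pre[of x n] by (simp add: Let_def nth_append)
  next
    case False
    then have "k = n" using Suc by simp
    then show ?thesis unfolding Phi_def by simp
  qed
qed

lemma Phi_eq: "Phi x n = (lo (Phi x) n + cp (Phi x) n * pF (Phi x) n \<le> x)"
proof -
  have h: "\<forall>k<n. (\<lambda>k. pre x n ! k) k = Phi x k" using pre_nth by auto
  have "Phi x n = (lo (\<lambda>k. pre x n ! k) n + cp (\<lambda>k. pre x n ! k) n * pF (\<lambda>k. pre x n ! k) n \<le> x)"
    unfolding Phi_def using length_pre[of x n] by (simp add: Let_def nth_append)
  then show ?thesis using lo_cong[OF h] cp_cong[OF h] pF_cong[OF h] by simp
qed

lemma cp_Suc: "cp \<omega> (Suc t) = cp \<omega> t * pmf (G \<omega> t) (\<omega> t)"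
  unfolding cp_def G_def by (rule cyl_prob_Suc)

lemma cp_nonneg: "0 \<le> cp \<omega> t"
  unfolding cp_def by (rule cyl_prob_nonneg)

lemma pF_bounds: "0 \<le> pF \<omega> t" "pF \<omega> t \<le> 1"
  unfolding pF_def by (auto simp: pmf_le_1)

lemma pT: "pmf (G \<omega> t) True = 1 - pF \<omega> t"
  unfolding pF_def using pmf_False_conv_True[of "G \<omega> t"] by simp

lemma bounds: "0 \<le> lo \<omega> t \<and> lo \<omega> t + cp \<omega> t \<le> 1"
proof (induction t)
  case 0 then show ?case by (simp add: cp_def cyl_prob_def)
next
  case (Suc t)
  have c: "0 \<le> cp \<omega> t" by (rule cp_nonneg)
  have p: "0 \<le> pF \<omega> t" "pF \<omega> t \<le> 1" by (rule pF_bounds)+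
  have m: "0 \<le> cp \<omega> t * pF \<omega> t" "cp \<omega> t * pF \<omega> t \<le> cp \<omega> t"
    using c p by (auto simp: mult_left_le)
  show ?case
  proof (cases "\<omega> t")
    case True
    then show ?thesis using Suc m by (simp add: cp_Suc pT algebra_simps)
  next
    case False
    then show ?thesis using Suc m by (simp add: cp_Suc pF_def[symmetric])
  qed
qed

lemma aux1: "a \<le> x \<and> x < a + c \<Longrightarrow> 0 \<le> (mm::real) \<Longrightarrow> mm \<le> c \<Longrightarrow>
  ((a+mm \<le> x) = b) \<longleftrightarrow> (if b then a+mm \<le> x \<and> x < a + c else a \<le> x \<and> x < a + mm)"
  by (cases b) auto

lemma aux2: "\<not> (a \<le> x \<and> x < a + c) \<Longrightarrow> 0 \<le> (mm::real) \<Longrightarrow> mm \<le> c \<Longrightarrow>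
  \<not> (if b then a+mm \<le> x \<and> x < a + c else a \<le> x \<and> x < a + mm)"
  by (cases b) auto

lemma key: "0 \<le> x \<Longrightarrow> x < 1 \<Longrightarrow>
   (\<forall>k<t. Phi x k = \<omega> k) \<longleftrightarrow> (lo \<omega> t \<le> x \<and> x < lo \<omega> t + cp \<omega> t)"
proof (induction t)
  case 0 then show ?case by (simp add: cp_def cyl_prob_def)
next
  case (Suc t)
  have c: "0 \<le> cp \<omega> t" by (rule cp_nonneg)
  have p: "0 \<le> pF \<omega> t" "pF \<omega> t \<le> 1" by (rule pF_bounds)+
  have m: "0 \<le> cp \<omega> t * pF \<omega> t" "cp \<omega> t * pF \<omega> t \<le> cp \<omega> t"
    using c p by (auto simp: mult_left_le)
  have split: "(\<forall>k<Suc t. Phi x k = \<omega> k) \<longleftrightarrow> (\<forall>k<t. Phi x k = \<omega> k) \<and> Phi x t = \<omega> t"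
    using less_Suc_eq by auto
  have lo': "lo \<omega> (Suc t) = lo \<omega> t + (if \<omega> t then cp \<omega> t * pF \<omega> t else 0)" by simp
  have cp': "cp \<omega> (Suc t) = (if \<omega> t then cp \<omega> t * (1 - pF \<omega> t) else cp \<omega> t * pF \<omega> t)"
    by (cases "\<omega> t") (auto simp: cp_Suc pT pF_def)
  have E1: "lo \<omega> (Suc t) = (if \<omega> t then lo \<omega> t + cp \<omega> t * pF \<omega> t else lo \<omega> t)" by simp
  have E2: "lo \<omega> (Suc t) + cp \<omega> (Suc t) = (if \<omega> t then lo \<omega> t + cp \<omega> t else lo \<omega> t + cp \<omega> t * pF \<omega> t)"
    using cp' E1 by (cases "\<omega> t") (simp_all add: right_diff_distrib)
  have R: "(lo \<omega> (Suc t) \<le> x \<and> x < lo \<omega> (Suc t) + cp \<omega> (Suc t)) \<longleftrightarrow>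
     (if \<omega> t then lo \<omega> t + cp \<omega> t * pF \<omega> t \<le> x \<and> x < lo \<omega> t + cp \<omega> t
      else lo \<omega> t \<le> x \<and> x < lo \<omega> t + cp \<omega> t * pF \<omega> t)"
    unfolding E2 by (cases "\<omega> t") (simp_all only: E1 if_True if_False)
  show ?case
  proof (cases "\<forall>k<t. Phi x k = \<omega> k")
    case True
    have eqs: "lo (Phi x) t = lo \<omega> t" "cp (Phi x) t = cp \<omega> t" "pF (Phi x) t = pF \<omega> t"
      using lo_cong[OF True] cp_cong[OF True] pF_cong[OF True] by auto
    have ph: "Phi x t = (lo \<omega> t + cp \<omega> t * pF \<omega> t \<le> x)" using Phi_eq[of x t] eqs by simp
    have iv: "lo \<omega> t \<le> x \<and> x < lo \<omega> t + cp \<omega> t" using Suc True by simp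
    have L: "(\<forall>k<Suc t. Phi x k = \<omega> k) \<longleftrightarrow> Phi x t = \<omega> t" using split True by blast
    show ?thesis unfolding L R ph using aux1[OF iv m] .
  next
    case False
    then have niv: "\<not> (lo \<omega> t \<le> x \<and> x < lo \<omega> t + cp \<omega> t)" using Suc by simp
    have L: "\<not> (\<forall>k<Suc t. Phi x k = \<omega> k)" using split False by blast
    show ?thesis unfolding R using L aux2[OF niv m, of "\<omega> t"] by blast
  qed
qed

definition Phi' :: "real \<Rightarrow> outcome_seq" where
  "Phi' x = Phi (if 0 \<le> x \<and> x < 1 then x else 0)"

lemma preimage: "Phi' -` cyl \<omega> t =
   {lo \<omega> t..<lo \<omega> t + cp \<omega> t} \<union> {x. \<not>(0 \<le> x \<and> x < 1) \<and> (lo \<omega> t \<le> 0 \<and> 0 < lo \<omega> t + cp \<omega> t)}"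
  (is "?L = ?R")
proof -
  have b: "0 \<le> lo \<omega> t" "lo \<omega> t + cp \<omega> t \<le> 1" using bounds by auto
  have "x \<in> ?L \<longleftrightarrow> x \<in> ?R" for x
  proof (cases "0 \<le> x \<and> x < 1")
    case True
    then show ?thesis using key[of x t \<omega>] b by (auto simp: Phi'_def cyl_def)
  next
    case False
    then show ?thesis using key[of 0 t \<omega>] b by (auto simp: Phi'_def cyl_def)
  qed
  then show ?thesis by blast
qed

definition U :: "real measure" where "U = uniform_measure lborel {0..<1}"

definition MM :: "outcome_seq measure" where "MM = distr U Omega_inf Phi'"

lemma cyls_Pow: "{cyl \<omega> t | \<omega> t. True} \<subseteq> Pow UNIV" by auto

lemma sets_Omega: "sets Omega_inf = sigma_sets UNIV {cyl \<omega> t | \<omega> t. True}"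
  unfolding Omega_inf_def by (simp add: sets_measure_of[OF cyls_Pow])

lemma space_Omega: "space Omega_inf = UNIV"
  unfolding Omega_inf_def by (simp add: space_measure_of[OF cyls_Pow])

lemma cyl_sets: "cyl \<omega> t \<in> sets Omega_inf"
  unfolding sets_Omega by (rule sigma_sets.Basic) auto

lemma Phi'_meas: "Phi' \<in> measurable U Omega_inf"
proof -
  have "Phi' \<in> measurable U (measure_of UNIV {cyl \<omega> t | \<omega> t. True} (\<lambda>x. 0))"
  proof (rule measurable_measure_of[OF cyls_Pow])
    show "Phi' \<in> space U \<rightarrow> UNIV" by simp
    fix y assume "y \<in> {cyl \<omega> t | \<omega> t. True}"
    then obtain \<omega> t where y: "y = cyl \<omega> t" by auto
    show "Phi' -` y \<inter> space U \<in> sets U"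
      unfolding y preimage U_def by (cases "lo \<omega> t \<le> 0 \<and> 0 < lo \<omega> t + cp \<omega> t") auto
  qed
  then show ?thesis unfolding Omega_inf_def .
qed

lemma U_prob: "prob_space U"
  unfolding U_def by (rule prob_space_uniform_measure) auto

lemma MM_prob: "prob_space MM"
  unfolding MM_def by (rule prob_space.prob_space_distr[OF U_prob Phi'_meas])

lemma MM_sets: "sets MM = sets Omega_inf"
  unfolding MM_def by simp

lemma MM_cyl: "emeasure MM (cyl \<omega> t) = ennreal (cp \<omega> t)"
proof -
  have b: "0 \<le> lo \<omega> t" "lo \<omega> t + cp \<omega> t \<le> 1" using bounds by auto
  have c: "0 \<le> cp \<omega> t" by (rule cp_nonneg)
  have "emeasure MM (cyl \<omega> t) = emeasure U (Phi' -` cyl \<omega> t \<inter> space U)"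
    unfolding MM_def by (rule emeasure_distr[OF Phi'_meas cyl_sets])
  also have "Phi' -` cyl \<omega> t \<inter> space U = Phi' -` cyl \<omega> t" by (simp add: U_def)
  also have "emeasure U (Phi' -` cyl \<omega> t) = emeasure lborel ({0..<1} \<inter> Phi' -` cyl \<omega> t) / emeasure lborel {0..<1::real}"
    unfolding U_def by (rule emeasure_uniform_measure) (auto simp: preimage)
  also have "{0..<1} \<inter> Phi' -` cyl \<omega> t = {lo \<omega> t..<lo \<omega> t + cp \<omega> t}"
    unfolding preimage using b by auto
  finally show ?thesis using c by (simp add: divide_ennreal_def)
qed

lemma MM_measure: "measure MM (cyl \<omega> t) = cyl_prob i f0 f1 \<omega> t"
  using MM_cyl[of \<omega> t] cp_nonneg[of \<omega> t] unfolding cp_def measure_def by simp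

end

lemma cyl_Int: "cyl \<omega> s \<inter> cyl \<omega>' t = {} \<or> cyl \<omega> s \<inter> cyl \<omega>' t = cyl \<omega> s \<or> cyl \<omega> s \<inter> cyl \<omega>' t = cyl \<omega>' t"
proof (cases "s \<le> t")
  case True
  show ?thesis
  proof (cases "\<forall>n<s. \<omega> n = \<omega>' n")
    case T: True
    then have "cyl \<omega> s \<inter> cyl \<omega>' t = cyl \<omega>' t" using True by (auto simp: cyl_def)
    then show ?thesis by simp
  next
    case False
    then have "cyl \<omega> s \<inter> cyl \<omega>' t = {}" using True by (auto simp: cyl_def)
    then show ?thesis by simp
  qed
next
  case False
  show ?thesis
  proof (cases "\<forall>n<t. \<omega> n = \<omega>' n")
    case T: True
    then have "cyl \<omega> s \<inter> cyl \<omega>' t = cyl \<omega> s" using False by (auto simp: cyl_def)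
    then show ?thesis by simp
  next
    case F: False
    then have "cyl \<omega> s \<inter> cyl \<omega>' t = {}" using False by (auto simp: cyl_def)
    then show ?thesis by simp
  qed
qed

lemma unique:
  assumes "prob_space M" "sets M = sets Omega_inf" "\<And>\<omega> t. measure M (cyl \<omega> t) = c \<omega> t"
    and "prob_space N" "sets N = sets Omega_inf" "\<And>\<omega> t. measure N (cyl \<omega> t) = c \<omega> t"
  shows "M = N"
proof -
  have fM: "finite_measure M" "finite_measure N" using assms(1,4) by (auto simp: prob_space_def)
  let ?E = "insert {} {cyl \<omega> t | \<omega> t. True}"
  have sE: "sigma_sets UNIV ?E = sigma_sets UNIV {cyl \<omega> t | \<omega> t. True}"
    by (rule sigma_sets_eqI) (auto intro: sigma_sets.Basic sigma_sets.Empty)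
  show ?thesis
  proof (rule measure_eqI_generator_eq[where E="?E" and \<Omega>=UNIV and A="\<lambda>_. cyl (\<lambda>_. True) 0"])
    show "Int_stable ?E"
      unfolding Int_stable_def using cyl_Int by blast
    show "?E \<subseteq> Pow UNIV" by auto
    fix X assume "X \<in> ?E"
    then show "emeasure M X = emeasure N X"
    proof
      assume "X = {}" then show ?thesis by simp
    next
      assume "X \<in> {cyl \<omega> t | \<omega> t. True}"
      then obtain \<omega> t where X: "X = cyl \<omega> t" by auto
      show ?thesis unfolding X using finite_measure.emeasure_eq_measure[OF fM(1)]
        finite_measure.emeasure_eq_measure[OF fM(2)] assms(3,6) by simp
    qed
  next
    show "sets M = sigma_sets UNIV ?E" using assms(2) sE sets_Omega by simp
    show "sets N = sigma_sets UNIV ?E" using assms(5) sE sets_Omega by simp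
    show "range (\<lambda>_. cyl (\<lambda>_. True) 0) \<subseteq> ?E" by auto
    show "(\<Union>i. cyl (\<lambda>_. True) 0) = UNIV" by (auto simp: cyl_def)
    fix i show "emeasure M (cyl (\<lambda>_. True) 0) \<noteq> \<infinity>"
      using finite_measure.emeasure_eq_measure[OF fM(1)] by simp
  qed
qed

lemma induced_props:
  "prob_space (induced i f0 f1) \<and> sets (induced i f0 f1) = sets Omega_inf \<and>
   (\<forall>\<omega> t. measure (induced i f0 f1) (cyl \<omega> t) = cyl_prob i f0 f1 \<omega> t)"
  unfolding induced_def
proof (rule theI[where a="MM i f0 f1"])
  show "prob_space (MM i f0 f1) \<and> sets (MM i f0 f1) = sets Omega_inf \<and>
    (\<forall>\<omega> t. measure (MM i f0 f1) (cyl \<omega> t) = cyl_prob i f0 f1 \<omega> t)"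
    using MM_prob MM_sets MM_measure by blast
  fix M assume "prob_space M \<and> sets M = sets Omega_inf \<and> (\<forall>\<omega> t. measure M (cyl \<omega> t) = cyl_prob i f0 f1 \<omega> t)"
  then show "M = MM i f0 f1"
    using unique[of M "cyl_prob i f0 f1" "MM i f0 f1"] MM_prob MM_sets MM_measure by blast
qed

theorem mainTheorem1:
  fixes f0 f1 :: strategy and T :: test
  assumes "absolutely_continuous (P0 f0 f1) (P1 f0 f1)"
    and "comparison_test T"
    and "anonymous T"
    and "error_free T"
  shows "measure (P0 f0 f1) {\<omega>. T \<omega> f0 f1 = 0} < 1"
proof (rule ccontr)
  let ?A = "{\<omega>. T \<omega> f0 f1 = 0}"
  assume ccontr: "\<not> ?thesis"
  have p0: "prob_space (P0 f0 f1)" "sets (P0 f0 f1) = sets Omega_inf" using induced_props by blast+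
  have p1: "prob_space (P1 f0 f1)" "sets (P1 f0 f1) = sets Omega_inf" using induced_props by blast+
  have A: "?A \<in> sets Omega_inf" using assms(2) unfolding comparison_test_def by blast
  have sp0: "space (P0 f0 f1) = UNIV" using sets_eq_imp_space_eq[OF p0(2)] space_Omega by simp
  have sp1: "space (P1 f0 f1) = UNIV" using sets_eq_imp_space_eq[OF p1(2)] space_Omega by simp
  have "measure (P0 f0 f1) ?A = 1" using ccontr prob_space.prob_le_1[OF p0(1), of ?A] by linarith
  then have "measure (P0 f0 f1) (UNIV - ?A) = 0"
    using prob_space.prob_compl[OF p0(1), of ?A] A p0(2) sp0 by simp
  moreover have CS: "UNIV - ?A \<in> sets (P0 f0 f1)"
    using sets.compl_sets[of ?A "P0 f0 f1"] A p0(2) sp0 by simp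
  moreover have fm0: "finite_measure (P0 f0 f1)" using p0(1) by (simp add: prob_space_def)
  ultimately have "UNIV - ?A \<in> null_sets (P0 f0 f1)"
    using finite_measure.emeasure_eq_measure[OF fm0, of "UNIV - ?A"] by (simp add: null_sets_def)
  then have "UNIV - ?A \<in> null_sets (P1 f0 f1)"
    using assms(1) unfolding absolutely_continuous_def by blast
  then have "measure (P1 f0 f1) (UNIV - ?A) = 0" unfolding measure_def using null_setsD1 by (metis enn2real_0)
  then have "measure (P1 f0 f1) ?A = 1"
    using prob_space.prob_compl[OF p1(1), of ?A] A p1(2) sp1 by simp
  moreover have "measure (P1 f0 f1) ?A = 0" using assms(4) unfolding error_free_def by blast
  ultimately show False by simp
qed

end
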